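(* Assume the standing setting with (H1), (H2), (P). Let $\lambda\ge e^{h(f)+\inf\phi}$ be an eigenvalue of $\mathcal L_\phi^*$ and $\nu$ a Borel probability with $\mathcal L_\phi^*\nu=\lambda\nu$. For $n\ge1$ let $B(n)=\{x\in M:\frac1n\#\{0\le j\le n-1: f^j(x)\in\mathcal A\}\ge\gamma\}$. Then $\nu(B(n))$ decreases exponentially fast as $n\to\infty$ (indeed $\nu(B(n))\le e^{-\varepsilon_0 n/2}$ for all large $n$); consequently $\nu$-almost every point belongs to $B(n)$ for at most finitely many $n$.
   Context: Standing setting. $(M,d)$ is a compact metric space of dimension $m$ in which the Besicovitch covering lemma holds. $f:M\to M$ is a local homeomorphism such that every point has finitely many preimages, each set $\{x:\#f^{-1}(x)=k\}$ is closed, and there is a bounded function $L:M\to(0,\infty)$ such that every $x\in M$ has a neighbourhood $U_x$ on which $f$ is injective and $d(f_x^{-1}(y),f_x^{-1}(z))\le L(x)\,d(y,z)$ for all $y,z\in f(U_x)$, where $f_x^{-1}$ is the inverse of $f|_{U_x}$. Let $h(f)=\liminf_{n\to\infty}\frac1n\log\min_{x\in M}\#f^{-n}(x)$; it is assumed that every point of $M$ has at least $e^{h(f)}$ preimages. $\phi:M\to\mathbb R$ is Hölder continuous. Hypotheses: (H2) there is a cover $\mathcal P=\{P_1,\dots,P_{k_0}\}$ of $M$ by sets on which $f$ is injective and an open set $\mathcal A\subset P_1\cup\dots\cup P_q$ for some integer $q<e^{h(f)}$. (P) $\sup\phi-\inf\phi<h(f)-\log q$. For $\gamma\in(0,1)$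 let $I(\gamma,n)$ be the set of $(i_0,\dots,i_{n-1})\in\{1,\dots,k_0\}^n$ with $\#\{0\le j\le n-1: i_j\le q\}>\gamma n$ and $c_\gamma=\limsup_n\frac1n\log\#I(\gamma,n)$. Fix $\varepsilon_0>0$ with $\sup\phi-\inf\phi+\varepsilon_0<h(f)-\log q$ and $\gamma\in(0,1)$ with $c_\gamma<\log q+\varepsilon_0/4$. (H1) there are constants $\sigma>1$, $L>0$, $c>0$ with $L(x)\le L$ for $x\in\mathcal A$, $L(x)\le\sigma^{-1}$ for $x\in M\setminus\mathcal A$, $\sigma^{-(1-\gamma)}L^\gamma<e^{-2c}<1$, and $\sup\phi-\inf\phi<h(f)-\log q-\varepsilon_0-m\log L$. $\mathcal L_\phi g(x)=\sum_{f(y)=x}e^{\phi(y)}g(y)$ on $C(M)$ and $\mathcal L_\phi^*$ is its dual acting on measures: $\int g\,d(\mathcal L_\phi^*\eta)=\int\mathcal L_\phi g\,d\eta$. *)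

theory Defs
  imports "HOL-Analysis.Analysis" "HOL-Probability.Probability"
begin

definition covering_dim_le :: "'a::metric_space set \<Rightarrow> nat \<Rightarrow> bool" where
  "covering_dim_le M m \<longleftrightarrow>
     (\<forall>U. finite U \<and> (\<forall>u\<in>U. openin (top_of_set M) u) \<and> M \<subseteq> \<Union>U \<longrightarrow>
        (\<exists>V. finite V \<and> (\<forall>v\<in>V. openin (top_of_set M) v) \<and> M \<subseteq> \<Union>V \<and>
             (\<forall>v\<in>V. \<exists>u\<in>U. v \<subseteq> u) \<and> (\<forall>x\<in>M. card {v\<in>V. x \<in> v} \<le> m + 1)))"

definition covering_dim :: "'a::metric_space set \<Rightarrow> nat \<Rightarrow> bool" where
  "covering_dim M m \<longleftrightarrow> covering_dim_le M m \<and> (\<forall>k<m. \<not> covering_dim_le M k)"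

definition besicovitch_property :: "'a::metric_space set \<Rightarrow> bool" where
  "besicovitch_property M \<longleftrightarrow>
     (\<exists>N::nat. \<forall>S r. S \<subseteq> M \<and> (\<forall>x\<in>S. r x > (0::real)) \<and> bdd_above (r ` S) \<longrightarrow>
        (\<exists>C\<subseteq>S. countable C \<and> S \<subseteq> (\<Union>x\<in>C. cball x (r x)) \<and>
            (\<forall>y\<in>M. finite {x\<in>C. y \<in> cball x (r x)} \<and> card {x\<in>C. y \<in> cball x (r x)} \<le> N)))"

definition local_homeomorphism_on :: "'a::metric_space set \<Rightarrow> ('a \<Rightarrow> 'a) \<Rightarrow> bool" where
  "local_homeomorphism_on M f \<longleftrightarrow> f ` M \<subseteq> M \<and>
     (\<forall>x\<in>M. \<exists>U. x \<in> U \<and> openin (top_of_set M) U \<and> openin (top_of_set M) (f ` U) \<and>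
        homeomorphism U (f ` U) f (inv_into U f))"

definition preim :: "'a set \<Rightarrow> ('a \<Rightarrow> 'a) \<Rightarrow> 'a \<Rightarrow> 'a set" where
  "preim M f x = {y\<in>M. f y = x}"

text \<open>h(f) = liminf (1/n) log min_x #f^{-n}(x) (the value is finite in the setting;
  we take the real part of the extended-real liminf).\<close>
definition degree_entropy :: "'a set \<Rightarrow> ('a \<Rightarrow> 'a) \<Rightarrow> real" where
  "degree_entropy M f =
     real_of_ereal (liminf (\<lambda>n. ereal (ln (real (INF x\<in>M. card (preim M (f ^^ n) x))) / real n)))"

definition holder_continuous_on :: "'a::metric_space set \<Rightarrow> ('a \<Rightarrow> real) \<Rightarrow> bool" where
  "holder_continuous_on M \<phi> \<longleftrightarrow>
     (\<exists>C \<alpha>. C \<ge> 0 \<and> \<alpha> > 0 \<and> (\<forall>x\<in>M. \<forall>y\<in>M. \<bar>\<phi> x - \<phi> y\<bar> \<le> C * dist x y powr \<alpha>))"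

definition transfer_op :: "'a set \<Rightarrow> ('a \<Rightarrow> 'a) \<Rightarrow> ('a \<Rightarrow> real) \<Rightarrow> ('a \<Rightarrow> real) \<Rightarrow> 'a \<Rightarrow> real" where
  "transfer_op M f \<phi> g x = (\<Sum>y\<in>preim M f x. exp (\<phi> y) * g y)"

definition itin_set :: "nat \<Rightarrow> nat \<Rightarrow> real \<Rightarrow> nat \<Rightarrow> nat list set" where
  "itin_set k0 q \<gamma> n = {is. length is = n \<and> set is \<subseteq> {1..k0} \<and>
       real (card {j. j < n \<and> is ! j \<le> q}) > \<gamma> * real n}"

text \<open>c_gamma = limsup (1/n) log #I(gamma,n), with log 0 = -infinity.\<close>
definition c_gamma :: "nat \<Rightarrow> nat \<Rightarrow> real \<Rightarrow> ereal" where
  "c_gamma k0 q \<gamma> = limsup (\<lambda>n. if card (itin_set k0 q \<gamma> n) = 0 then -\<infinity>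
        else ereal (ln (real (card (itin_set k0 q \<gamma> n))) / real n))"

definition freq_set :: "'a set \<Rightarrow> ('a \<Rightarrow> 'a) \<Rightarrow> 'a set \<Rightarrow> real \<Rightarrow> nat \<Rightarrow> 'a set" where
  "freq_set M f A \<gamma> n = {x\<in>M. real (card {j. j < n \<and> (f ^^ j) x \<in> A}) / real n \<ge> \<gamma>}"

end

theory Submission
  imports Defs
begin



lemma openin_tendsto:
  assumes "openin (top_of_set M) U" "x \<in> U" "continuous_on U h"
  shows "(h \<longlongrightarrow> h x) (at x within M)"
proof -
  obtain T where T: "open T" "U = M \<inter> T" using assms(1) by (auto simp: openin_open)
  have "(h \<longlongrightarrow> h x) (at x within U)"
    using assms(2,3) by (simp add: continuous_on_def)
  moreover have "at x within U = at x within M"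
    by (rule at_within_nhd[of x T]) (use T assms(2) in auto)
  ultimately show ?thesis by simp
qed

lemma openin_eventually:
  assumes "openin (top_of_set M) U" "x \<in> U"
  shows "eventually (\<lambda>y. y \<in> U) (at x within M)"
proof -
  obtain T where T: "open T" "U = M \<inter> T" using assms(1) by (auto simp: openin_open)
  have "eventually (\<lambda>y. y \<in> T) (nhds x)"
    using T assms(2) eventually_nhds_in_open by blast
  then show ?thesis unfolding eventually_at_filter
    by eventually_elim (use T in auto)
qed

lemma in_M_eventually: "eventually (\<lambda>y. y \<in> M) (at x within M)"
  unfolding eventually_at_filter by simp

locale lh =
  fixes M :: "'a::metric_space set" and f :: "'a \<Rightarrow> 'a"
  assumes cM: "compact M"
    and lhom: "local_homeomorphism_on M f"
    and ffin: "\<forall>x\<in>M. finite (preim M f x)"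
    and fclosed: "\<forall>k. closedin (top_of_set M) {x\<in>M. card (preim M f x) = k}"
begin

lemma fM: "f ` M \<subseteq> M" using lhom by (simp add: local_homeomorphism_on_def)

lemma local_U:
  assumes "x \<in> M"
  obtains U where "x \<in> U" "openin (top_of_set M) U" "openin (top_of_set M) (f ` U)"
    "homeomorphism U (f ` U) f (inv_into U f)"
  using lhom assms by (auto simp: local_homeomorphism_on_def)

lemma preim_fin: "finite (preim M f x)"
proof (cases "x \<in> M")
  case True then show ?thesis using ffin by auto
next
  case False then have "preim M f x = {}" using fM by (auto simp: preim_def)
  then show ?thesis by simp
qed

lemma card_bound: "\<exists>N. \<forall>x. card (preim M f x) \<le> N"
proof -
  have "\<forall>x\<in>M. \<exists>T. open T \<and> x \<in> T \<and> inj_on f (M \<inter> T)"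
  proof
    fix x assume "x \<in> M"
    then obtain U where U: "x \<in> U" "openin (top_of_set M) U"
      "homeomorphism U (f ` U) f (inv_into U f)" by (rule local_U)
    obtain T where T: "open T" "U = M \<inter> T" using U(2) by (auto simp: openin_open)
    have "inj_on f U" using U(3) unfolding homeomorphism_def by (metis inj_on_inverseI)
    then show "\<exists>T. open T \<and> x \<in> T \<and> inj_on f (M \<inter> T)" using T U(1) by auto
  qed
  then obtain T where T: "\<forall>x\<in>M. open (T x) \<and> x \<in> T x \<and> inj_on f (M \<inter> T x)" by metis
  obtain D where D: "D \<subseteq> M" "finite D" "M \<subseteq> \<Union>(T ` D)"
    using compactE_image[OF cM, of M T] T by blast
  have "card (preim M f x) \<le> card D" for x
  proof -
    have eq: "preim M f x = (\<Union>d\<in>D. preim M f x \<inter> T d)"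
      using D(3) by (auto simp: preim_def)
    have le1: "card (preim M f x \<inter> T d) \<le> 1" if "d \<in> D" for d
    proof -
      have inj: "inj_on f (preim M f x \<inter> T d)"
        using T D(1) that by (auto simp: preim_def intro: inj_on_subset)
      have "f ` (preim M f x \<inter> T d) \<subseteq> {x}" by (auto simp: preim_def)
      then have "card (f ` (preim M f x \<inter> T d)) \<le> 1"
        using card_mono[of "{x}"] by fastforce
      then show ?thesis using card_image[OF inj] by simp
    qed
    have "card (preim M f x) \<le> (\<Sum>d\<in>D. card (preim M f x \<inter> T d))"
      by (subst eq) (rule card_UN_le[OF D(2)])
    also have "\<dots> \<le> (\<Sum>d\<in>D. 1)" by (rule sum_mono) (use le1 in auto)
    finally show ?thesis by simp
  qed
  then show ?thesis by blast
qed

lemma closed_big: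
  "closedin (top_of_set M) {x\<in>M. k < card (preim M f x)}"
proof -
  obtain N where N: "\<forall>x. card (preim M f x) \<le> N" using card_bound by blast
  have "{x\<in>M. k < card (preim M f x)} = (\<Union>j\<in>{k<..N}. {x\<in>M. card (preim M f x) = j})"
    using N by (auto simp: le_less_trans)
  moreover have "closedin (top_of_set M) (\<Union>j\<in>{k<..N}. {x\<in>M. card (preim M f x) = j})"
    by (rule closedin_Union) (use fclosed in auto)
  ultimately show ?thesis by simp
qed

lemma transfer_cont:
  assumes phic: "continuous_on M \<phi>" and gc: "continuous_on M g"
  shows "continuous_on M (transfer_op M f \<phi> g)"
  unfolding continuous_on_def
proof
  fix x0 assume x0: "x0 \<in> M"
  define Y where "Y = preim M f x0"
  have Yfin: "finite Y" using preim_fin Y_def by simp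
  have YM: "Y \<subseteq> M" by (auto simp: Y_def preim_def)
  have "\<forall>y\<in>Y. \<exists>U. y \<in> U \<and> openin (top_of_set M) U \<and> openin (top_of_set M) (f ` U) \<and>
        homeomorphism U (f ` U) f (inv_into U f)"
  proof
    fix y assume "y \<in> Y"
    then have "y \<in> M" using YM by auto
    then obtain U where "y \<in> U" "openin (top_of_set M) U" "openin (top_of_set M) (f ` U)"
      "homeomorphism U (f ` U) f (inv_into U f)" by (rule local_U)
    then show "\<exists>U. y \<in> U \<and> openin (top_of_set M) U \<and> openin (top_of_set M) (f ` U) \<and>
        homeomorphism U (f ` U) f (inv_into U f)" by blast
  qed
  then obtain U where U: "\<And>y. y\<in>Y \<Longrightarrow> y \<in> U y \<and> openin (top_of_set M) (U y) \<and> openin (top_of_set M) (f ` U y) \<and>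
        homeomorphism (U y) (f ` U y) f (inv_into (U y) f)" by (metis (no_types))
  define iv where "iv y = inv_into (U y) f" for y
  have UM: "U y \<subseteq> M" if "y \<in> Y" for y using U[OF that] openin_subset by force
  have ivU: "iv y x \<in> U y" if "y \<in> Y" "x \<in> f ` U y" for y x
    using that U unfolding iv_def homeomorphism_def by blast
  have fiv: "f (iv y x) = x" if "y \<in> Y" "x \<in> f ` U y" for y x
    using that U unfolding iv_def homeomorphism_def by blast
  have ivc: "continuous_on (f ` U y) (iv y)" if "y \<in> Y" for y
    using that U unfolding iv_def homeomorphism_def by blast
  have x0U: "x0 \<in> f ` U y" if "y \<in> Y" for y
    using that U by (auto simp: Y_def preim_def)
  have ivx0: "iv y x0 = y" if "y \<in> Y" for y
  proof -
    have "iv y (f y) = y" using that U unfolding iv_def homeomorphism_def by blast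
    then show ?thesis using that by (simp add: Y_def preim_def)
  qed
  have ivM: "iv y ` f ` U y \<subseteq> M" if "y \<in> Y" for y using ivU UM that by blast
  have tiv: "(iv y \<longlongrightarrow> y) (at x0 within M)" if "y \<in> Y" for y
    using openin_tendsto[of M "f ` U y" x0 "iv y"] that U x0U ivc ivx0 by metis
  define F where "F x = (\<Sum>y\<in>Y. exp (\<phi> (iv y x)) * g (iv y x))" for x
  have "(F \<longlongrightarrow> F x0) (at x0 within M)"
    unfolding F_def
  proof (rule tendsto_sum)
    fix y assume y: "y \<in> Y"
    have "continuous_on (f ` U y) (\<lambda>x. exp (\<phi> (iv y x)) * g (iv y x))"
      by (intro continuous_intros continuous_on_compose2[OF phic ivc[OF y]]
          continuous_on_compose2[OF gc ivc[OF y]]) (use ivM[OF y] in auto)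
    then show "((\<lambda>x. exp (\<phi> (iv y x)) * g (iv y x)) \<longlongrightarrow> exp (\<phi> (iv y x0)) * g (iv y x0)) (at x0 within M)"
      using openin_tendsto[of M "f ` U y" x0] U y x0U by blast
  qed
  moreover have "F x0 = transfer_op M f \<phi> g x0"
    unfolding F_def transfer_op_def Y_def[symmetric] by (rule sum.cong) (simp_all add: ivx0)
  moreover have "eventually (\<lambda>x. F x = transfer_op M f \<phi> g x) (at x0 within M)"
  proof -
    have E1: "eventually (\<lambda>x. \<forall>y\<in>Y. x \<in> f ` U y) (at x0 within M)"
    proof (rule eventually_ball_finite[OF Yfin], rule ballI)
      fix y assume y: "y \<in> Y"
      have "openin (top_of_set M) (f ` U y)" using U[OF y] by blast
      then show "\<forall>\<^sub>F x in at x0 within M. x \<in> f ` U y" using openin_eventually x0U[OF y] by blast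
    qed
    have E3: "eventually (\<lambda>x. \<forall>p\<in>Y\<times>Y. fst p \<noteq> snd p \<longrightarrow> iv (fst p) x \<noteq> iv (snd p) x) (at x0 within M)"
    proof (rule eventually_ball_finite)
      show "finite (Y \<times> Y)" using Yfin by simp
      show "\<forall>p\<in>Y \<times> Y. \<forall>\<^sub>F x in at x0 within M. fst p \<noteq> snd p \<longrightarrow> iv (fst p) x \<noteq> iv (snd p) x"
      proof
        fix p assume p: "p \<in> Y \<times> Y"
        show "\<forall>\<^sub>F x in at x0 within M. fst p \<noteq> snd p \<longrightarrow> iv (fst p) x \<noteq> iv (snd p) x"
        proof (cases "fst p = snd p")
          case True then show ?thesis by simp
        next
          case False
          have "((\<lambda>x. dist (iv (fst p) x) (iv (snd p) x)) \<longlongrightarrow> dist (fst p) (snd p)) (at x0 within M)"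
            using p by (intro tendsto_dist tiv) auto
          moreover have "dist (fst p) (snd p) > 0" using False by simp
          ultimately have "eventually (\<lambda>x. dist (iv (fst p) x) (iv (snd p) x) > 0) (at x0 within M)"
            using order_tendstoD(1) by blast
          then show ?thesis by eventually_elim auto
        qed
      qed
    qed
    have E4: "eventually (\<lambda>x. x \<in> M - {x\<in>M. card Y < card (preim M f x)}) (at x0 within M)"
      by (rule openin_eventually) (use closed_big x0 Y_def in auto)
    show ?thesis using E1 E3 E4
    proof eventually_elim
      case (elim x)
      then have xM: "x \<in> M" by auto
      have sub: "(\<lambda>y. iv y x) ` Y \<subseteq> preim M f x"
      proof (rule image_subsetI)
        fix y assume y: "y \<in> Y"
        have xU: "x \<in> f ` U y" using elim(1) y by blast
        have "iv y x \<in> M" using ivU[OF y xU] UM[OF y] by blast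
        then show "iv y x \<in> preim M f x" using fiv[OF y xU] by (simp add: preim_def)
      qed
      have inj: "inj_on (\<lambda>y. iv y x) Y"
        using elim(2) unfolding inj_on_def by fastforce
      have "card ((\<lambda>y. iv y x) ` Y) = card Y" using card_image[OF inj] .
      moreover have "card (preim M f x) \<le> card Y" using elim(3) by auto
      ultimately have eq: "(\<lambda>y. iv y x) ` Y = preim M f x"
        using card_subset_eq[OF preim_fin sub] card_mono[OF preim_fin sub] by linarith
      show ?case unfolding transfer_op_def F_def eq[symmetric]
        by (subst sum.reindex[OF inj]) simp
    qed
  qed
  ultimately show "(transfer_op M f \<phi> g \<longlongrightarrow> transfer_op M f \<phi> g x0) (at x0 within M)"
    using Lim_transform_eventually by fastforce
qed

lemma funpow_M: "x \<in> M \<Longrightarrow> (f ^^ n) x \<in> M"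
  by (induction n) (use fM in auto)

lemma preim_iter_fin: "finite (preim M (f ^^ n) x)"
proof (induction n arbitrary: x)
  case 0
  have "preim M (f ^^ 0) x \<subseteq> {x}" by (auto simp: preim_def)
  then show ?case using finite_subset by blast
next
  case (Suc n)
  have "preim M (f ^^ Suc n) x \<subseteq> (\<Union>z\<in>preim M f x. preim M (f ^^ n) z)"
    by (auto simp: preim_def funpow_M)
  moreover have "finite (\<Union>z\<in>preim M f x. preim M (f ^^ n) z)"
    using preim_fin Suc by blast
  ultimately show ?case using finite_subset by blast
qed

lemma sum_preim_Suc:
  "(\<Sum>z\<in>preim M f x. \<Sum>w\<in>preim M (f ^^ n) z. g w) = (\<Sum>w\<in>preim M (f ^^ Suc n) x. g w)"
proof -
  have "(\<Sum>z\<in>preim M f x. \<Sum>w\<in>{w. w \<in> preim M (f ^^ Suc n) x \<and> (f ^^ n) w = z}. g w)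
      = (\<Sum>w\<in>preim M (f ^^ Suc n) x. g w)"
    by (rule sum.group[OF preim_iter_fin preim_fin]) (auto simp: preim_def funpow_M)
  moreover have "{w. w \<in> preim M (f ^^ Suc n) x \<and> (f ^^ n) w = z} = preim M (f ^^ n) z"
    if "z \<in> preim M f x" for z
    using that by (auto simp: preim_def)
  ultimately show ?thesis by (metis (no_types, lifting) sum.cong)
qed

lemma iter_bound:
  assumes phiS: "\<forall>y\<in>M. \<phi> y \<le> S" and gnn: "\<forall>y. 0 \<le> g y" and xM: "x \<in> M"
  shows "0 \<le> (transfer_op M f \<phi> ^^ n) g x \<and>
         (transfer_op M f \<phi> ^^ n) g x \<le> exp (real n * S) * (\<Sum>w\<in>preim M (f ^^ n) x. g w)"
  using xM
proof (induction n arbitrary: x)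
  case 0
  then have "preim M (\<lambda>a. a) x = {x}" by (auto simp: preim_def)
  then show ?case using gnn by (simp add: id_def)
next
  case (Suc n)
  define G where "G = (transfer_op M f \<phi> ^^ n) g"
  have Gb: "0 \<le> G z \<and> G z \<le> exp (real n * S) * (\<Sum>w\<in>preim M (f ^^ n) z. g w)" if "z \<in> preim M f x" for z
    using Suc.IH[of z] that unfolding G_def by (auto simp: preim_def)
  have eq: "(transfer_op M f \<phi> ^^ Suc n) g x = (\<Sum>z\<in>preim M f x. exp (\<phi> z) * G z)"
    by (simp add: G_def transfer_op_def)
  have "(\<Sum>z\<in>preim M f x. exp (\<phi> z) * G z)
      \<le> (\<Sum>z\<in>preim M f x. exp S * (exp (real n * S) * (\<Sum>w\<in>preim M (f ^^ n) z. g w)))"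
  proof (rule sum_mono)
    fix z assume z: "z \<in> preim M f x"
    have "\<phi> z \<le> S" using phiS z by (auto simp: preim_def)
    then show "exp (\<phi> z) * G z \<le> exp S * (exp (real n * S) * (\<Sum>w\<in>preim M (f ^^ n) z. g w))"
      using Gb[OF z] by (intro mult_mono) auto
  qed
  also have "\<dots> = exp (real (Suc n) * S) * (\<Sum>z\<in>preim M f x. \<Sum>w\<in>preim M (f ^^ n) z. g w)"
  proof -
    have e: "exp (real (Suc n) * S) = exp S * exp (real n * S)"
      by (simp add: exp_add[symmetric] algebra_simps)
    show ?thesis unfolding e sum_distrib_left by (simp add: mult.assoc)
  qed
  also have "\<dots> = exp (real (Suc n) * S) * (\<Sum>w\<in>preim M (f ^^ Suc n) x. g w)"
    by (simp add: sum_preim_Suc)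
  finally have le: "(transfer_op M f \<phi> ^^ Suc n) g x \<le> exp (real (Suc n) * S) * (\<Sum>w\<in>preim M (f ^^ Suc n) x. g w)"
    using eq by simp
  have "0 \<le> (\<Sum>z\<in>preim M f x. exp (\<phi> z) * G z)"
    using Gb by (intro sum_nonneg) auto
  then show ?case using eq le by (simp add: comp_def)
qed

lemma iter_cont:
  assumes "continuous_on M \<phi>" "continuous_on M g"
  shows "continuous_on M ((transfer_op M f \<phi> ^^ n) g)"
  by (induction n) (use assms transfer_cont in auto)

end



lemma openin_sets:
  assumes "sets \<nu> = sets (restrict_space borel M)" "openin (top_of_set M) U"
  shows "U \<in> sets \<nu>"
proof -
  obtain T where T: "open T" "U = M \<inter> T" using assms(2) by (auto simp: openin_open)
  have "T \<in> sets borel" using T(1) by simp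
  then show ?thesis using assms(1) T(2) by (simp add: sets_restrict_space)
qed

lemma cont_meas:
  assumes "sets \<nu> = sets (restrict_space borel M)" "continuous_on M g"
  shows "g \<in> borel_measurable \<nu>"
  using borel_measurable_continuous_on_restrict[OF assms(2)] measurable_cong_sets[OF assms(1) refl]
  by blast

lemma open_measure_bound:
  fixes \<nu> :: "'a::metric_space measure"
  assumes P: "prob_space \<nu>" and S: "sets \<nu> = sets (restrict_space borel M)" and SP: "space \<nu> = M"
    and cM: "compact M" and U: "openin (top_of_set M) U"
    and H: "\<And>g. continuous_on M g \<Longrightarrow> (\<forall>x. 0 \<le> g x \<and> g x \<le> 1) \<Longrightarrow> (\<forall>x\<in>M-U. g x = 0)
             \<Longrightarrow> integral\<^sup>L \<nu> g \<le> C"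
  shows "measure \<nu> U \<le> C"
proof (cases "M - U = {}")
  case True
  have a: "M \<subseteq> U" using True by (simp only: Diff_eq_empty_iff)
  have b: "U \<subseteq> M" using openin_subset[OF U] by simp
  have UM: "U = M" by (rule subset_antisym[OF b a])
  have "integral\<^sup>L \<nu> (\<lambda>_. 1::real) \<le> C" by (rule H) (use a in \<open>auto intro: continuous_on_const\<close>)
  moreover have "measure \<nu> (space \<nu>) = 1" using P by (rule prob_space.prob_space)
  moreover have "integral\<^sup>L \<nu> (\<lambda>_. 1::real) = measure \<nu> (space \<nu>)"
    by simp
  moreover have "space \<nu> = U" using SP UM by simp
  ultimately show ?thesis by simp
next
  case False
  interpret prob_space \<nu> by (rule P)
  define g where "g k x = min 1 (real k * infdist x (M - U))" for k :: nat and x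
  have gc: "continuous_on M (g k)" for k unfolding g_def by (intro continuous_intros)
  have gb: "0 \<le> g k x \<and> g k x \<le> 1" for k x unfolding g_def by (auto simp: infdist_nonneg)
  have g0: "\<forall>x\<in>M-U. g k x = 0" for k unfolding g_def by simp
  have Ule: "integral\<^sup>L \<nu> (g k) \<le> C" for k using H[OF gc] gb g0 by blast
  have cl: "closed (M - U)"
    using closedin_closed_trans[OF _ compact_imp_closed[OF cM]] U by (simp add: closedin_diff)
  have Uin: "U \<in> sets \<nu>" using openin_sets[OF S U] .
  have lim: "(\<lambda>k. integral\<^sup>L \<nu> (g k)) \<longlonglongrightarrow> integral\<^sup>L \<nu> (indicator U)"
  proof (rule integral_dominated_convergence[where w="\<lambda>_. 1"])
    show "indicator U \<in> borel_measurable \<nu>" using Uin by simp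
    show "g k \<in> borel_measurable \<nu>" for k using cont_meas[OF S gc] .
    show "integrable \<nu> (\<lambda>_. 1::real)" by simp
    show "AE x in \<nu>. norm (g k x) \<le> 1" for k using gb by simp
    show "AE x in \<nu>. (\<lambda>k. g k x) \<longlonglongrightarrow> indicator U x"
    proof (rule AE_I2)
      fix x assume x: "x \<in> space \<nu>"
      show "(\<lambda>k. g k x) \<longlonglongrightarrow> indicator U x"
      proof (cases "x \<in> U")
        case True
        have d: "infdist x (M - U) > 0" using infdist_pos_not_in_closed[OF cl False] True by blast
        obtain N :: nat where N: "real N > 1 / infdist x (M - U)" using reals_Archimedean2 by blast
        have "eventually (\<lambda>k. g k x = 1) sequentially"
          unfolding eventually_sequentially
        proof (intro exI allI impI)
          fix k assume "N \<le> k"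
          then have "real k > 1 / infdist x (M - U)" using N by linarith
          then have "real k * infdist x (M - U) > 1" using d by (simp add: field_simps)
          then show "g k x = 1" unfolding g_def by simp
        qed
        then show ?thesis using True by (simp add: tendsto_eventually)
      next
        case False
        then have "g k x = 0" for k using x SP g0 by auto
        then show ?thesis using False by simp
      qed
    qed
  qed
  have "integral\<^sup>L \<nu> (indicator U) = measure \<nu> U"
    using Uin by (simp add: Int_absorb2 sets.sets_into_space)
  then show ?thesis using LIMSEQ_le_const2[OF lim] Ule by auto
qed




definition Wset :: "nat \<Rightarrow> nat \<Rightarrow> real \<Rightarrow> nat \<Rightarrow> nat list set" where
  "Wset k0 q \<gamma> n = {ws. length ws = n \<and> set ws \<subseteq> {1..k0} \<and>
       real (card {j. j < n \<and> ws ! j \<le> q}) \<ge> \<gamma> * real n}"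

lemma itin_fin: "finite (itin_set k0 q \<gamma> n)"
proof -
  have "itin_set k0 q \<gamma> n \<subseteq> {ws. set ws \<subseteq> {1..k0} \<and> length ws = n}"
    by (auto simp: itin_set_def)
  then show ?thesis using finite_lists_length_eq[of "{1..k0}" n] finite_subset by blast
qed

lemma Wset_card:
  assumes "\<gamma> < 1" "1 \<le> q" "q \<le> k0" "1 \<le> n"
  shows "real (card (Wset k0 q \<gamma> n)) \<le> (1 + real n * real k0) * real (card (itin_set k0 q \<gamma> n))"
proof -
  define I where "I = itin_set k0 q \<gamma> n"
  define R where "R = (\<lambda>(w::nat list, p::nat, a::nat). w[p:=a]) ` (I \<times> {..<n} \<times> {1..k0})"
  have If: "finite I" using itin_fin I_def by simp
  have Rf: "finite R" unfolding R_def using If by simp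
  have sub: "Wset k0 q \<gamma> n \<subseteq> I \<union> R"
  proof
    fix w assume w: "w \<in> Wset k0 q \<gamma> n"
    then have len: "length w = n" and sw: "set w \<subseteq> {1..k0}"
      and ge: "real (card {j. j < n \<and> w ! j \<le> q}) \<ge> \<gamma> * real n"
      by (auto simp: Wset_def)
    show "w \<in> I \<union> R"
    proof (cases "real (card {j. j < n \<and> w ! j \<le> q}) > \<gamma> * real n")
      case True then show ?thesis using len sw by (auto simp: I_def itin_set_def)
    next
      case False
      then have eq: "real (card {j. j < n \<and> w ! j \<le> q}) = \<gamma> * real n" using ge by linarith
      have "\<gamma> * real n < real n" using assms by simp
      then have lt: "card {j. j < n \<and> w ! j \<le> q} < card {..<n}" using eq by simp
      have "\<exists>p<n. \<not> w ! p \<le> q"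
      proof (rule ccontr)
        assume "\<not> (\<exists>p<n. \<not> w ! p \<le> q)"
        then have "{j. j < n \<and> w ! j \<le> q} = {..<n}" by auto
        then show False using lt by simp
      qed
      then obtain p where p: "p < n" "\<not> w ! p \<le> q" by blast
      define w' where "w' = w[p := 1]"
      have len': "length w' = n" using len by (simp add: w'_def)
      have sw': "set w' \<subseteq> {1..k0}"
        using set_update_subset_insert[of w p 1] sw assms by (auto simp: w'_def)
      have "{j. j < n \<and> w' ! j \<le> q} = insert p {j. j < n \<and> w ! j \<le> q}"
        using p len assms by (auto simp: w'_def nth_list_update)
      moreover have "p \<notin> {j. j < n \<and> w ! j \<le> q}" using p by simp
      ultimately have "card {j. j < n \<and> w' ! j \<le> q} = Suc (card {j. j < n \<and> w ! j \<le> q})"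
        by simp
      then have "real (card {j. j < n \<and> w' ! j \<le> q}) > \<gamma> * real n" using eq by simp
      then have wI: "w' \<in> I" using len' sw' by (simp add: I_def itin_set_def)
      have wp: "w ! p \<in> {1..k0}" using sw p len nth_mem by blast
      have "w = w'[p := w ! p]" by (simp add: w'_def)
      then have "w \<in> R" unfolding R_def using wI p wp
        by (intro image_eqI[where x="(w', p, w ! p)"]) auto
      then show ?thesis by simp
    qed
  qed
  have "card (Wset k0 q \<gamma> n) \<le> card (I \<union> R)" by (rule card_mono) (use If Rf sub in auto)
  also have "\<dots> \<le> card I + card R" by (rule card_Un_le)
  also have "card R \<le> card (I \<times> {..<n} \<times> {1..k0})" unfolding R_def by (rule card_image_le) (use If in simp)
  also have "card (I \<times> {..<n} \<times> {1..k0}) = card I * n * k0" by (simp add: card_cartesian_product)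
  finally have "card (Wset k0 q \<gamma> n) \<le> card I + card I * n * k0" by simp
  then have "real (card (Wset k0 q \<gamma> n)) \<le> real (card I) + real (card I) * real n * real k0"
    by (metis of_nat_add of_nat_le_iff of_nat_mult)
  then show ?thesis by (simp add: I_def algebra_simps)
qed




lemma back_inj:
  assumes inj: "\<forall>i\<in>{1..k0}. inj_on f (P i)"
  shows "(\<forall>j<k. \<exists>i\<in>{1..k0}. (f ^^ j) y \<in> P i \<and> (f ^^ j) y' \<in> P i) \<Longrightarrow> (f ^^ k) y = (f ^^ k) y' \<Longrightarrow> y = y'"
proof (induction k arbitrary: y y')
  case 0 then show ?case by simp
next
  case (Suc k)
  have "\<forall>j<k. \<exists>i\<in>{1..k0}. (f ^^ j) (f y) \<in> P i \<and> (f ^^ j) (f y') \<in> P i"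
  proof (intro allI impI)
    fix j assume "j < k"
    then obtain i where "i\<in>{1..k0}" "(f ^^ Suc j) y \<in> P i \<and> (f ^^ Suc j) y' \<in> P i"
      using Suc.prems(1) by blast
    then show "\<exists>i\<in>{1..k0}. (f ^^ j) (f y) \<in> P i \<and> (f ^^ j) (f y') \<in> P i"
      by (auto simp: funpow_Suc_right simp del: funpow.simps)
  qed
  moreover have "(f ^^ k) (f y) = (f ^^ k) (f y')"
    using Suc.prems(2) by (simp add: funpow_Suc_right del: funpow.simps)
  ultimately have fy: "f y = f y'" using Suc.IH by blast
  obtain i where i: "i\<in>{1..k0}" "y \<in> P i" "y' \<in> P i" using Suc.prems(1)[rule_format, of 0] by auto
  show ?case using inj i fy by (meson inj_onD)
qed

lemma Wset_fin: "finite (Wset k0 q \<gamma> n)"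
proof -
  have "Wset k0 q \<gamma> n \<subseteq> {ws. set ws \<subseteq> {1..k0} \<and> length ws = n}"
    by (auto simp: Wset_def)
  then show ?thesis using finite_lists_length_eq[of "{1..k0}" n] finite_subset by blast
qed

lemma preim_B_card:
  assumes fM: "f ` M \<subseteq> M"
    and P_cover: "M \<subseteq> (\<Union>i\<in>{1..k0}. P i)"
    and P_inj: "\<forall>i\<in>{1..k0}. inj_on f (P i)"
    and q: "q \<le> k0" and A: "A \<subseteq> (\<Union>i\<in>{1..q}. P i)" and n: "1 \<le> n"
  shows "card (preim M (f ^^ n) x \<inter> freq_set M f A \<gamma> n) \<le> card (Wset k0 q \<gamma> n)"
proof -
  define pick where "pick z = (if z \<in> A then (SOME i. i\<in>{1..q} \<and> z\<in>P i) else (SOME i. i\<in>{1..k0} \<and> z\<in>P i))" for z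
  have pick: "pick z \<in> {1..k0} \<and> z \<in> P (pick z) \<and> (z \<in> A \<longrightarrow> pick z \<le> q)" if "z \<in> M" for z
  proof (cases "z \<in> A")
    case True
    then have "\<exists>i. i\<in>{1..q} \<and> z\<in>P i" using A by blast
    then have "(SOME i. i\<in>{1..q} \<and> z\<in>P i) \<in> {1..q} \<and> z \<in> P (SOME i. i\<in>{1..q} \<and> z\<in>P i)"
      by (rule someI_ex)
    then show ?thesis using True q by (auto simp: pick_def)
  next
    case False
    then have "\<exists>i. i\<in>{1..k0} \<and> z\<in>P i" using P_cover that by blast
    then have "(SOME i. i\<in>{1..k0} \<and> z\<in>P i) \<in> {1..k0} \<and> z \<in> P (SOME i. i\<in>{1..k0} \<and> z\<in>P i)"
      by (rule someI_ex)
    then show ?thesis using False by (auto simp: pick_def)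
  qed
  have fjM: "(f ^^ j) y \<in> M" if "y \<in> M" for y j
    using that by (induction j) (use fM in auto)
  define word where "word y = map (\<lambda>j. pick ((f ^^ j) y)) [0..<n]" for y
  define S where "S = preim M (f ^^ n) x \<inter> freq_set M f A \<gamma> n"
  have inj: "inj_on word S"
  proof (rule inj_onI)
    fix y y' assume y: "y \<in> S" and y': "y' \<in> S" and w: "word y = word y'"
    have yM: "y \<in> M" "y' \<in> M" using y y' by (auto simp: S_def preim_def)
    show "y = y'"
    proof (rule back_inj[OF P_inj])
      show "\<forall>j<n. \<exists>i\<in>{1..k0}. (f ^^ j) y \<in> P i \<and> (f ^^ j) y' \<in> P i"
      proof (intro allI impI)
        fix j assume j: "j < n"
        have "word y ! j = word y' ! j" using w by simp
        then have e: "pick ((f ^^ j) y) = pick ((f ^^ j) y')" using j by (simp add: word_def)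
        show "\<exists>i\<in>{1..k0}. (f ^^ j) y \<in> P i \<and> (f ^^ j) y' \<in> P i"
          using pick[OF fjM[OF yM(1)]] pick[OF fjM[OF yM(2)]] e by metis
      qed
      show "(f ^^ n) y = (f ^^ n) y'" using y y' by (auto simp: S_def preim_def)
    qed
  qed
  have img: "word ` S \<subseteq> Wset k0 q \<gamma> n"
  proof
    fix w assume "w \<in> word ` S"
    then obtain y where y: "y \<in> S" and wy: "w = word y" by blast
    have yM: "y \<in> M" using y by (auto simp: S_def preim_def)
    have fr: "real (card {j. j < n \<and> (f ^^ j) y \<in> A}) / real n \<ge> \<gamma>"
      using y by (auto simp: S_def freq_set_def)
    then have fr': "real (card {j. j < n \<and> (f ^^ j) y \<in> A}) \<ge> \<gamma> * real n"
      using n by (simp add: pos_le_divide_eq)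
    have "{j. j < n \<and> (f ^^ j) y \<in> A} \<subseteq> {j. j < n \<and> w ! j \<le> q}"
      using pick[OF fjM[OF yM]] by (auto simp: wy word_def)
    then have "card {j. j < n \<and> (f ^^ j) y \<in> A} \<le> card {j. j < n \<and> w ! j \<le> q}"
      by (rule card_mono[rotated]) auto
    then have "real (card {j. j < n \<and> w ! j \<le> q}) \<ge> \<gamma> * real n" using fr' by linarith
    moreover have "set w \<subseteq> {1..k0}" using pick[OF fjM[OF yM]] by (auto simp: wy word_def)
    moreover have "length w = n" by (simp add: wy word_def)
    ultimately show "w \<in> Wset k0 q \<gamma> n" by (simp add: Wset_def)
  qed
  have "card S = card (word ` S)" using card_image[OF inj] by simp
  also have "\<dots> \<le> card (Wset k0 q \<gamma> n)" by (rule card_mono[OF Wset_fin img])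
  finally show ?thesis by (simp add: S_def)
qed




lemma holder_cont:
  assumes "holder_continuous_on M \<phi>"
  shows "continuous_on M \<phi>"
proof -
  obtain C \<alpha> where H: "C \<ge> 0" "\<alpha> > 0" "\<forall>x\<in>M. \<forall>y\<in>M. \<bar>\<phi> x - \<phi> y\<bar> \<le> C * dist x y powr \<alpha>"
    using assms by (auto simp: holder_continuous_on_def)
  show ?thesis unfolding continuous_on_def
  proof
    fix x assume x: "x \<in> M"
    have t: "((\<lambda>y. C * dist y x powr \<alpha>) \<longlongrightarrow> 0) (at x within M)"
    proof -
      have "((\<lambda>y. dist y x powr \<alpha>) \<longlongrightarrow> 0) (at x within M)"
        by (rule tendsto_zero_powrI) (auto intro!: tendsto_dist_iff[THEN iffD1] tendsto_ident_at H(2))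
      from tendsto_mult_left[OF this, of C] show ?thesis by simp
    qed
    have "((\<lambda>y. \<phi> y - \<phi> x) \<longlongrightarrow> 0) (at x within M)"
    proof (rule Lim_null_comparison[OF _ t])
      show "\<forall>\<^sub>F y in at x within M. norm (\<phi> y - \<phi> x) \<le> C * dist y x powr \<alpha>"
        using in_M_eventually[of M x] by eventually_elim (use H(3) x in auto)
    qed
    then show "(\<phi> \<longlongrightarrow> \<phi> x) (at x within M)" by (simp add: LIM_zero_iff)
  qed
qed

context lh begin

lemma f_cont: "continuous_on M f"
  unfolding continuous_on_def
proof
  fix x assume "x \<in> M"
  then obtain U where U: "x \<in> U" "openin (top_of_set M) U" "homeomorphism U (f ` U) f (inv_into U f)"
    by (rule local_U)
  have "continuous_on U f" using U(3) by (simp add: homeomorphism_def)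
  then show "(f \<longlongrightarrow> f x) (at x within M)" using openin_tendsto U by blast
qed

lemma fj_cont: "continuous_on M (f ^^ j)"
proof (induction j)
  case 0 then show ?case by (simp add: continuous_on_id)
next
  case (Suc j)
  have "continuous_on M (f \<circ> (f ^^ j))"
    by (rule continuous_on_compose[OF Suc], rule continuous_on_subset[OF f_cont]) (use funpow_M in auto)
  then show ?case by simp
qed

lemma freq_open:
  assumes A: "openin (top_of_set M) A" and g: "0 < \<gamma>"
  shows "openin (top_of_set M) (freq_set M f A \<gamma> n)"
proof (cases "n = 0")
  case True
  then have "freq_set M f A \<gamma> n = {}" using g by (auto simp: freq_set_def)
  then show ?thesis by simp
next
  case False
  define S where "S j = {x\<in>M. (f ^^ j) x \<in> A}" for j
  have So: "openin (top_of_set M) (S j)" for j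
  proof -
    have "openin (top_of_set M) (M \<inter> (f ^^ j) -` A)"
      by (rule continuous_openin_preimage[OF fj_cont _ A]) (use funpow_M in auto)
    moreover have "M \<inter> (f ^^ j) -` A = S j" by (auto simp: S_def)
    ultimately show ?thesis by simp
  qed
  define K where "K = {J. J \<subseteq> {..<n} \<and> \<gamma> * real n \<le> real (card J)}"
  have eq: "freq_set M f A \<gamma> n = (\<Union>J\<in>K. (\<Inter>j\<in>J. S j) \<inter> M)"
  proof
    show "freq_set M f A \<gamma> n \<subseteq> (\<Union>J\<in>K. (\<Inter>j\<in>J. S j) \<inter> M)"
    proof
      fix x assume x: "x \<in> freq_set M f A \<gamma> n"
      define J where "J = {j. j < n \<and> (f ^^ j) x \<in> A}"
      have "real (card J) / real n \<ge> \<gamma>" "x \<in> M" using x by (auto simp: freq_set_def J_def)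
      then have "J \<in> K" "x \<in> (\<Inter>j\<in>J. S j) \<inter> M" using False
        by (auto simp: K_def J_def S_def pos_le_divide_eq)
      then show "x \<in> (\<Union>J\<in>K. (\<Inter>j\<in>J. S j) \<inter> M)" by blast
    qed
    show "(\<Union>J\<in>K. (\<Inter>j\<in>J. S j) \<inter> M) \<subseteq> freq_set M f A \<gamma> n"
    proof
      fix x assume "x \<in> (\<Union>J\<in>K. (\<Inter>j\<in>J. S j) \<inter> M)"
      then obtain J where J: "J \<in> K" "x \<in> (\<Inter>j\<in>J. S j)" "x \<in> M" by blast
      have "J \<subseteq> {j. j < n \<and> (f ^^ j) x \<in> A}" using J by (auto simp: K_def S_def)
      then have "card J \<le> card {j. j < n \<and> (f ^^ j) x \<in> A}" by (rule card_mono[rotated]) auto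
      then have "\<gamma> * real n \<le> real (card {j. j < n \<and> (f ^^ j) x \<in> A})"
        using J(1) unfolding K_def by (smt (verit) mem_Collect_eq of_nat_le_iff)
      then show "x \<in> freq_set M f A \<gamma> n" using False J(3)
        by (simp add: freq_set_def pos_le_divide_eq)
    qed
  qed
  have "openin (top_of_set M) (\<Union>J\<in>K. (\<Inter>j\<in>J. S j) \<inter> M)"
  proof (rule openin_Union, clarify)
    fix J assume "J \<in> K"
    then have "finite J" by (auto simp: K_def finite_subset)
    then have "openin (top_of_set M) ((\<Inter>j\<in>J. S j) \<inter> topspace (top_of_set M))"
      by (rule openin_INT) (rule So)
    then show "openin (top_of_set M) ((\<Inter>j\<in>J. S j) \<inter> M)" by simp
  qed
  then show ?thesis using eq by simp
qed

end



theorem proposition4p4: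
  fixes M :: "'a::metric_space set" and m :: nat
    and f :: "'a \<Rightarrow> 'a" and Lf :: "'a \<Rightarrow> real" and \<phi> :: "'a \<Rightarrow> real"
    and P :: "nat \<Rightarrow> 'a set" and k0 q :: nat and A :: "'a set"
    and \<epsilon>0 \<gamma> \<sigma> L c lam :: real and \<nu> :: "'a measure"
  defines "h \<equiv> degree_entropy M f"
    and "supphi \<equiv> (SUP x\<in>M. \<phi> x)" and "infphi \<equiv> (INF x\<in>M. \<phi> x)"
  assumes M: "compact M" "M \<noteq> {}" "covering_dim M m" "besicovitch_property M"
    and f_lh: "local_homeomorphism_on M f"
    and f_fin: "\<forall>x\<in>M. finite (preim M f x)"
    and f_closed: "\<forall>k. closedin (top_of_set M) {x\<in>M. card (preim M f x) = k}"
    and Lf_pos: "\<forall>x\<in>M. Lf x > 0" and Lf_bdd: "bdd_above (Lf ` M)"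
    and Lf_lip: "\<forall>x\<in>M. \<exists>U. x \<in> U \<and> openin (top_of_set M) U \<and> inj_on f U \<and>
                   (\<forall>y\<in>f ` U. \<forall>z\<in>f ` U. dist (inv_into U f y) (inv_into U f z) \<le> Lf x * dist y z)"
    and h_preim: "\<forall>x\<in>M. real (card (preim M f x)) \<ge> exp h"
    and \<phi>_holder: "holder_continuous_on M \<phi>"
    \<comment> \<open>(H2)\<close>
    and P_sub: "\<forall>i\<in>{1..k0}. P i \<subseteq> M" and P_cover: "M \<subseteq> (\<Union>i\<in>{1..k0}. P i)"
    and P_inj: "\<forall>i\<in>{1..k0}. inj_on f (P i)"
    and q: "1 \<le> q" "q \<le> k0" "real q < exp h"
    and A: "openin (top_of_set M) A" "A \<subseteq> (\<Union>i\<in>{1..q}. P i)"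
    \<comment> \<open>(P)\<close>
    and hypP: "supphi - infphi < h - ln (real q)"
    \<comment> \<open>choice of \<epsilon>0 and \<gamma>\<close>
    and \<epsilon>0: "\<epsilon>0 > 0" "supphi - infphi + \<epsilon>0 < h - ln (real q)"
    and \<gamma>: "0 < \<gamma>" "\<gamma> < 1" "c_gamma k0 q \<gamma> < ereal (ln (real q) + \<epsilon>0 / 4)"
    \<comment> \<open>(H1)\<close>
    and H1: "\<sigma> > 1" "L > 0" "c > 0"
      "\<forall>x\<in>A. Lf x \<le> L" "\<forall>x\<in>M - A. Lf x \<le> 1 / \<sigma>"
      "\<sigma> powr (-(1 - \<gamma>)) * L powr \<gamma> < exp (-2 * c)" "exp (-2 * c) < 1"
      "supphi - infphi < h - ln (real q) - \<epsilon>0 - real m * ln L"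
    \<comment> \<open>the eigenmeasure\<close>
    and lam: "lam \<ge> exp (h + infphi)"
    and \<nu>: "prob_space \<nu>" "sets \<nu> = sets (restrict_space borel M)" "space \<nu> = M"
    and eig: "\<forall>g. continuous_on M g \<longrightarrow>
               integral\<^sup>L \<nu> (transfer_op M f \<phi> g) = lam * integral\<^sup>L \<nu> g"
  shows "(\<forall>\<^sub>F n in sequentially. measure \<nu> (freq_set M f A \<gamma> n) \<le> exp (- \<epsilon>0 * real n / 2))
       \<and> (AE x in \<nu>. finite {n. n \<ge> 1 \<and> x \<in> freq_set M f A \<gamma> n})"
proof -
  interpret lh M f by unfold_locales (use M(1) f_lh f_fin f_closed in auto)
  have phic: "continuous_on M \<phi>" using holder_cont[OF \<phi>_holder] .
  have cimg: "compact (\<phi> ` M)" using compact_continuous_image[OF phic M(1)] .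
  have bdA: "bdd_above (\<phi> ` M)" using bounded_imp_bdd_above[OF compact_imp_bounded[OF cimg]] .
  have bdB: "bdd_below (\<phi> ` M)" using bounded_imp_bdd_below[OF compact_imp_bounded[OF cimg]] .
  have phiS: "\<forall>y\<in>M. \<phi> y \<le> supphi" unfolding supphi_def using bdA by (auto intro: cSUP_upper)
  have lam_pos: "lam > 0" using lam by (smt (verit) exp_gt_zero)
  interpret prob_space \<nu> by (rule \<nu>(1))
  define T where "T = transfer_op M f \<phi>"
  have eig_iter: "integral\<^sup>L \<nu> ((T ^^ n) g) = lam ^ n * integral\<^sup>L \<nu> g" if gc: "continuous_on M g" for n and g :: "'a \<Rightarrow> real"
  proof (induction n)
    case 0 then show ?case by simp
  next
    case (Suc n)
    have "continuous_on M ((T ^^ n) g)" unfolding T_def by (rule iter_cont[OF phic gc])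
    then have "integral\<^sup>L \<nu> (T ((T ^^ n) g)) = lam * integral\<^sup>L \<nu> ((T ^^ n) g)"
      using eig unfolding T_def by blast
    then show ?case using Suc by simp
  qed
  define B where "B n = freq_set M f A \<gamma> n" for n
  have Bo: "openin (top_of_set M) (B n)" for n unfolding B_def by (rule freq_open[OF A(1) \<gamma>(1)])
  have Bsets: "B n \<in> sets \<nu>" for n using openin_sets[OF \<nu>(2) Bo] .
  have mbound: "measure \<nu> (B n) \<le> exp (real n * supphi) * real (card (Wset k0 q \<gamma> n)) / lam ^ n"
    if n: "1 \<le> n" for n
  proof (rule open_measure_bound[OF \<nu>(1) \<nu>(2) \<nu>(3) M(1) Bo])
    fix g :: "'a \<Rightarrow> real" assume gc: "continuous_on M g" and gb: "\<forall>x. 0 \<le> g x \<and> g x \<le> 1" and g0: "\<forall>x\<in>M - B n. g x = 0"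
    define K where "K = exp (real n * supphi) * real (card (Wset k0 q \<gamma> n))"
    have pt: "(T ^^ n) g x \<le> K" if x: "x \<in> M" for x
    proof -
      have "(T ^^ n) g x \<le> exp (real n * supphi) * (\<Sum>w\<in>preim M (f ^^ n) x. g w)"
        using iter_bound[OF phiS _ x, of g n] gb unfolding T_def by blast
      also have "(\<Sum>w\<in>preim M (f ^^ n) x. g w) \<le> real (card (Wset k0 q \<gamma> n))"
      proof -
        let ?P = "preim M (f ^^ n) x"
        have "(\<Sum>w\<in>?P. g w) = (\<Sum>w\<in>?P \<inter> B n. g w) + (\<Sum>w\<in>?P - B n. g w)"
          by (rule sum.Int_Diff[OF preim_iter_fin])
        moreover have "(\<Sum>w\<in>?P - B n. g w) = 0"
          using g0 by (intro sum.neutral) (auto simp: preim_def)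
        moreover have "(\<Sum>w\<in>?P \<inter> B n. g w) \<le> (\<Sum>w\<in>?P \<inter> B n. 1)"
          using gb by (intro sum_mono) auto
        moreover have "card (?P \<inter> B n) \<le> card (Wset k0 q \<gamma> n)"
          unfolding B_def by (rule preim_B_card[OF fM P_cover P_inj q(2) A(2) n])
        ultimately show ?thesis by simp
      qed
      finally show ?thesis unfolding K_def by (simp add: mult_left_mono)
    qed
    have Kge: "0 \<le> K" unfolding K_def by simp
    have "integral\<^sup>L \<nu> ((T ^^ n) g) \<le> integral\<^sup>L \<nu> (\<lambda>_. K)"
      by (rule integral_mono_AE') (use pt Kge \<nu>(3) in auto)
    also have "\<dots> = K" by (simp add: prob_space)
    finally have "lam ^ n * integral\<^sup>L \<nu> g \<le> K" using eig_iter[OF gc] by simp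
    then show "integral\<^sup>L \<nu> g \<le> exp (real n * supphi) * real (card (Wset k0 q \<gamma> n)) / lam ^ n"
      using lam_pos unfolding K_def by (simp add: field_simps)
  qed
  define a where "a = ln (real q) + \<epsilon>0 / 4"
  have Ecard: "eventually (\<lambda>n. real (card (itin_set k0 q \<gamma> n)) \<le> exp (real n * a)) sequentially"
  proof -
    have "eventually (\<lambda>n. (if card (itin_set k0 q \<gamma> n) = 0 then -\<infinity>
        else ereal (ln (real (card (itin_set k0 q \<gamma> n))) / real n)) < ereal a) sequentially"
      by (rule Limsup_lessD) (use \<gamma>(3) in \<open>simp add: c_gamma_def a_def\<close>)
    moreover have "eventually (\<lambda>n. (1::nat) \<le> n) sequentially" by (rule eventually_ge_at_top)
    ultimately show ?thesis
    proof eventually_elim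
      case (elim n)
      show ?case
      proof (cases "card (itin_set k0 q \<gamma> n) = 0")
        case True then show ?thesis by simp
      next
        case False
        then have "ln (real (card (itin_set k0 q \<gamma> n))) / real n < a" using elim(1) by simp
        then have "ln (real (card (itin_set k0 q \<gamma> n))) < real n * a" using elim(2)
          by (simp add: divide_less_eq mult.commute)
        then have "exp (ln (real (card (itin_set k0 q \<gamma> n)))) < exp (real n * a)" by simp
        then show ?thesis using False by simp
      qed
    qed
  qed
  have Epoly: "eventually (\<lambda>n. 1 + real n * real k0 \<le> exp (real n * (\<epsilon>0 / 4))) sequentially"
  proof -
    obtain N :: nat where N: "real N \<ge> 64 * (1 + real k0) / \<epsilon>0\<^sup>2" using real_nat_ceiling_ge by blast
    have "eventually (\<lambda>n. max N 1 \<le> n) sequentially" by (rule eventually_ge_at_top)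
    then show ?thesis
    proof eventually_elim
      case (elim n)
      define t where "t = real n * (\<epsilon>0 / 4)"
      have t0: "0 \<le> t" using \<epsilon>0(1) by (simp add: t_def)
      have "1 + t / 2 \<le> exp (t / 2)" by (rule exp_ge_add_one_self)
      then have "(1 + t / 2) * (1 + t / 2) \<le> exp (t / 2) * exp (t / 2)"
        using t0 by (intro mult_mono) auto
      also have "exp (t / 2) * exp (t / 2) = exp t" by (simp add: exp_add[symmetric])
      also have "(1 + t / 2) * (1 + t / 2) = 1 + t + t * t / 4" by (simp add: field_simps)
      finally have e1: "t * t / 4 \<le> exp t" using t0 by linarith
      have n1: "1 \<le> real n" and nN: "real N \<le> real n" using elim by auto
      have "64 * (1 + real k0) / \<epsilon>0\<^sup>2 \<le> real n" using N nN by linarith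
      then have "64 * (1 + real k0) \<le> real n * \<epsilon>0\<^sup>2" using \<epsilon>0(1) by (simp add: divide_le_eq)
      then have "real n * (64 * (1 + real k0)) \<le> real n * (real n * \<epsilon>0\<^sup>2)" using n1 by (intro mult_left_mono) auto
      moreover have "t * t / 4 = real n * (real n * \<epsilon>0\<^sup>2) / 64"
        unfolding t_def by (simp add: power2_eq_square)
      moreover have "1 + real n * real k0 \<le> real n * (1 + real k0)" using n1 by (simp add: algebra_simps)
      ultimately have "1 + real n * real k0 \<le> t * t / 4" by linarith
      then show ?case using e1 t_def by simp
    qed
  qed
  have Emain: "eventually (\<lambda>n. measure \<nu> (B n) \<le> exp (- \<epsilon>0 * real n / 2)) sequentially"
    using Ecard Epoly eventually_ge_at_top[of "1::nat"]
  proof eventually_elim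
    case (elim n)
    have n1: "1 \<le> n" using elim by simp
    define W where "W = real (card (Wset k0 q \<gamma> n))"
    define I where "I = real (card (itin_set k0 q \<gamma> n))"
    have W0: "0 \<le> W" by (simp add: W_def)
    have "W \<le> (1 + real n * real k0) * I"
      unfolding W_def I_def by (rule Wset_card) (use \<gamma> q n1 in auto)
    also have "\<dots> \<le> exp (real n * (\<epsilon>0 / 4)) * exp (real n * a)"
      using elim(1,2) unfolding I_def by (intro mult_mono) auto
    finally have W1: "W \<le> exp (real n * (\<epsilon>0 / 4)) * exp (real n * a)" .
    have lamn: "exp (real n * (h + infphi)) \<le> lam ^ n"
    proof -
      have "exp (h + infphi) ^ n \<le> lam ^ n" using lam by (intro power_mono) auto
      then show ?thesis by (simp add: exp_of_nat_mult)
    qed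
    have "measure \<nu> (B n) \<le> exp (real n * supphi) * W / lam ^ n"
      using mbound[OF n1] by (simp add: W_def)
    also have "\<dots> \<le> exp (real n * supphi) * W / exp (real n * (h + infphi))"
      using lamn W0 lam_pos by (intro divide_left_mono mult_nonneg_nonneg) auto
    also have "\<dots> \<le> exp (real n * supphi) * (exp (real n * (\<epsilon>0 / 4)) * exp (real n * a)) / exp (real n * (h + infphi))"
      using W1 by (intro divide_right_mono mult_left_mono) auto
    also have "\<dots> = exp (real n * (supphi + \<epsilon>0 / 4 + a - h - infphi))"
      by (simp add: exp_add[symmetric] exp_diff[symmetric] algebra_simps)
    also have "\<dots> \<le> exp (- \<epsilon>0 * real n / 2)"
    proof -
      have "supphi + \<epsilon>0 / 4 + a - h - infphi \<le> - \<epsilon>0 / 2"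
        using \<epsilon>0(2) unfolding a_def by simp
      then have "real n * (supphi + \<epsilon>0 / 4 + a - h - infphi) \<le> real n * (- \<epsilon>0 / 2)"
        by (intro mult_left_mono) auto
      then show ?thesis by (simp add: mult.commute)
    qed
    finally show ?case .
  qed
  have sumB: "summable (\<lambda>n. measure \<nu> (B n))"
  proof -
    obtain N where N: "\<forall>n\<ge>N. measure \<nu> (B n) \<le> exp (- \<epsilon>0 * real n / 2)"
      using Emain by (auto simp: eventually_sequentially)
    have gs: "summable (\<lambda>n. exp (- \<epsilon>0 / 2) ^ n)"
      by (rule summable_geometric) (use \<epsilon>0(1) in simp)
    have "\<forall>n\<ge>N. norm (measure \<nu> (B n)) \<le> exp (- \<epsilon>0 / 2) ^ n"
    proof (intro allI impI)
      fix n assume "N \<le> n"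
      then have "measure \<nu> (B n) \<le> exp (- \<epsilon>0 * real n / 2)" using N by blast
      moreover have "exp (- \<epsilon>0 * real n / 2) = exp (- \<epsilon>0 / 2) ^ n"
        by (simp add: exp_of_nat_mult[symmetric] algebra_simps)
      ultimately show "norm (measure \<nu> (B n)) \<le> exp (- \<epsilon>0 / 2) ^ n" by simp
    qed
    then show ?thesis by (intro summable_comparison_test'[OF gs, of N]) auto
  qed
  have "AE x in \<nu>. eventually (\<lambda>n. x \<in> space \<nu> - B n) sequentially"
    by (rule borel_cantelli_AE1[OF Bsets]) (use sumB in \<open>auto simp: less_top[symmetric]\<close>)
  then have AE: "AE x in \<nu>. finite {n. n \<ge> 1 \<and> x \<in> freq_set M f A \<gamma> n}"
  proof (rule AE_mp, intro AE_I2 impI)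
    fix x assume "eventually (\<lambda>n. x \<in> space \<nu> - B n) sequentially"
    then obtain N where N: "\<forall>n\<ge>N. x \<notin> B n" by (auto simp: eventually_sequentially)
    have "{n. n \<ge> 1 \<and> x \<in> freq_set M f A \<gamma> n} \<subseteq> {..<N}"
      using N unfolding B_def by (auto simp: not_less[symmetric])
    then show "finite {n. n \<ge> 1 \<and> x \<in> freq_set M f A \<gamma> n}" using finite_subset by blast
  qed
  show ?thesis using Emain AE unfolding B_def by blast
qed



end
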